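(* For a coupled relation $\mathcal{R}$ let $\mathcal{R}^C=\left(\mathcal{R}_1^\star,\ \mathcal{R}_2\langle\mathcal{R}_1^\star\rangle\cup\mathcal{R}_1^\star\right)$. Then: (a) for all coupled relations $\mathcal{R},\mathcal{S}$ with $\mathcal{R}\subseteq\mathcal{S}$ and $\mathcal{R}\rightarrowtail\mathcal{S}$, we have $\mathcal{R}^C\subseteq\mathcal{S}^C$ and $\mathcal{R}^C\rightarrowtail\mathcal{S}^C$; (b) if $\mathcal{R}$ is a coupled relation with $\mathcal{R}\rightarrowtail\mathcal{R}^C$, then $\mathcal{R}$ is contained (componentwise) in some call-by-name coupled logical bisimulation; (c) if $\mathcal{R}$ is a call-by-name coupled logical bisimulation, then so is $\mathcal{R}^C$.
   Context: $\Lambda^\bullet$ is the set of closed $\lambda$-terms. Contexts are generated by $C::=x\mid[\cdot]\mid C\,C\mid\lambda x.C$, possibly with several holes numbered left to right; $C[\widetilde M]$ fills the $i$-th hole with $M_i$. For $\mathcal{R}\subseteq\Lambda^\bullet\times\Lambda^\bullet$, $\mathcal{R}^\star=\{(C[\widetilde M],C[\widetilde N]) : C\text{ a context},\ M_i\,\mathcal{R}\,N_i\ \forall i,\ C[\widetilde M],C[\widetilde N]\in\Lambda^\bullet\}$. For relations $\mathcal{R},\mathcal{R}'$ on $\Lambda^\bullet$, $\mathcal{R}\langle\mathcal{R}'\rangle=\{(E M_1\cdots M_k,\ F N_1\cdots N_k) : k\ge0,\ E\,\mathcal{R}\,F,\ M_i\,\mathcal{R}'\,N_i\ \forall i\}$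 (application associating to the left). A coupled relation is a pair $(\mathcal{R}_1,\mathcal{R}_2)$ of relations on $\Lambda^\bullet$ with $\mathcal{R}_1\subseteq\mathcal{R}_2$; inclusion is componentwise. Call-by-name reduction on closed terms: $MN\longrightarrow M'N$ if $M\longrightarrow M'$, and $(\lambda x.P)N\longrightarrow P[N/x]$; $\Longrightarrow$ is its reflexive transitive closure. For coupled relations $\mathcal{R},\mathcal{S}$, $\mathcal{R}\rightarrowtail\mathcal{S}$ holds iff whenever $M\,\mathcal{R}_2\,N$: (i) if $M\longrightarrow M'$ then $N\Longrightarrow N'$ for some $N'$ with $M'\,\mathcal{S}_2\,N'$; (ii) if $M=\lambda x.P$ then $N\Longrightarrow\lambda x.Q$ for some $Q$ such that $P[X/x]\,\mathcal{S}_2\,Q[Y/x]$ for all $X\,\mathcal{R}_1^\star\,Y$; (iii) the same conditions with $M$ and $N$ exchanged. A coupled relation $\mathcal{R}$ is a (call-by-name) coupled logical bisimulation iff $\mathcal{R}\rightarrowtail\mathcal{R}$. *)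

theory Defs
  imports Main
begin

datatype trm = Var nat | App trm trm | Lam trm

fun closedn :: "nat \<Rightarrow> trm \<Rightarrow> bool" where
  "closedn k (Var i) = (i < k)"
| "closedn k (App M N) = (closedn k M \<and> closedn k N)"
| "closedn k (Lam M) = closedn (Suc k) M"

definition closed :: "trm \<Rightarrow> bool" where
  "closed M = closedn 0 M"

fun lift :: "trm \<Rightarrow> nat \<Rightarrow> trm" where
  "lift (Var i) k = (if i < k then Var i else Var (Suc i))"
| "lift (App M N) k = App (lift M k) (lift N k)"
| "lift (Lam M) k = Lam (lift M (Suc k))"

text \<open>subst P N k = P[N/k]: capture-avoiding substitution of N for index k.\<close>
fun subst :: "trm \<Rightarrow> trm \<Rightarrow> nat \<Rightarrow> trm" where
  "subst (Var i) N k = (if i < k then Var i else if i = k then N else Var (i - 1))"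
| "subst (App M M') N k = App (subst M N k) (subst M' N k)"
| "subst (Lam M) N k = Lam (subst M (lift N 0) (Suc k))"

inductive cbn :: "trm \<Rightarrow> trm \<Rightarrow> bool" where
  cbn_app: "cbn M M' \<Longrightarrow> cbn (App M N) (App M' N)"
| cbn_beta: "cbn (App (Lam P) N) (subst P N 0)"

abbreviation cbn_star :: "trm \<Rightarrow> trm \<Rightarrow> bool" where
  "cbn_star \<equiv> cbn\<^sup>*\<^sup>*"

datatype ctx = CVar nat | CHole | CApp ctx ctx | CLam ctx

fun holes :: "ctx \<Rightarrow> nat" where
  "holes (CVar i) = 0"
| "holes CHole = 1"
| "holes (CApp C D) = holes C + holes D"
| "holes (CLam C) = holes C"

text \<open>Fill the holes from left to right with the given terms (which are closed,
  so no lifting is needed under binders).\<close>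
fun fill :: "ctx \<Rightarrow> trm list \<Rightarrow> trm" where
  "fill (CVar i) Ms = Var i"
| "fill CHole Ms = hd Ms"
| "fill (CApp C D) Ms = App (fill C (take (holes C) Ms)) (fill D (drop (holes C) Ms))"
| "fill (CLam C) Ms = Lam (fill C Ms)"

type_synonym rel = "(trm \<times> trm) set"

definition ctx_closure :: "rel \<Rightarrow> rel" where
  "ctx_closure R = {(fill C Ms, fill C Ns) | C Ms Ns.
      length Ms = holes C \<and> length Ns = holes C \<and>
      list_all2 (\<lambda>M N. (M, N) \<in> R) Ms Ns \<and>
      closed (fill C Ms) \<and> closed (fill C Ns)}"

definition apps :: "trm \<Rightarrow> trm list \<Rightarrow> trm" where
  "apps E Ms = foldl App E Ms"

definition app_closure :: "rel \<Rightarrow> rel \<Rightarrow> rel" where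
  "app_closure R R' = {(apps E Ms, apps F Ns) | E F Ms Ns.
      (E, F) \<in> R \<and> list_all2 (\<lambda>M N. (M, N) \<in> R') Ms Ns}"

type_synonym crel = "rel \<times> rel"

definition coupled :: "crel \<Rightarrow> bool" where
  "coupled R \<longleftrightarrow> fst R \<subseteq> snd R \<and> snd R \<subseteq> {(M, N). closed M \<and> closed N}"

definition crel_le :: "crel \<Rightarrow> crel \<Rightarrow> bool" where
  "crel_le R S \<longleftrightarrow> fst R \<subseteq> fst S \<and> snd R \<subseteq> snd S"

definition progress :: "crel \<Rightarrow> crel \<Rightarrow> bool" where
  "progress R S \<longleftrightarrow> (\<forall>M N. (M, N) \<in> snd R \<longrightarrow>
      (\<forall>M'. cbn M M' \<longrightarrow> (\<exists>N'. cbn_star N N' \<and> (M', N') \<in> snd S)) \<and>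
      (\<forall>P. M = Lam P \<longrightarrow> (\<exists>Q. cbn_star N (Lam Q) \<and>
          (\<forall>X Y. (X, Y) \<in> ctx_closure (fst R) \<longrightarrow> (subst P X 0, subst Q Y 0) \<in> snd S))) \<and>
      (\<forall>N'. cbn N N' \<longrightarrow> (\<exists>M'. cbn_star M M' \<and> (M', N') \<in> snd S)) \<and>
      (\<forall>Q. N = Lam Q \<longrightarrow> (\<exists>P. cbn_star M (Lam P) \<and>
          (\<forall>X Y. (X, Y) \<in> ctx_closure (fst R) \<longrightarrow> (subst P X 0, subst Q Y 0) \<in> snd S))))"

definition coupled_logical_bisim :: "crel \<Rightarrow> bool" where
  "coupled_logical_bisim R \<longleftrightarrow> coupled R \<and> progress R R"

definition cclos :: "crel \<Rightarrow> crel" where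
  "cclos R = (ctx_closure (fst R), app_closure (snd R) (ctx_closure (fst R)) \<union> ctx_closure (fst R))"

end

theory Submission
  imports Defs
begin

inductive ctxr :: "rel \<Rightarrow> trm \<Rightarrow> trm \<Rightarrow> bool" for R where
  cvar: "ctxr R (Var i) (Var i)"
| cbase: "(M, N) \<in> R \<Longrightarrow> ctxr R M N"
| capp: "ctxr R M1 N1 \<Longrightarrow> ctxr R M2 N2 \<Longrightarrow> ctxr R (App M1 M2) (App N1 N2)"
| clam: "ctxr R M N \<Longrightarrow> ctxr R (Lam M) (Lam N)"

lemma ctxr_AppE: "ctxr R (App A B) N \<Longrightarrow>
   (\<lbrakk>(App A B, N) \<in> R\<rbrakk> \<Longrightarrow> thesis) \<Longrightarrow>
   (\<And>C D. \<lbrakk>N = App C D; ctxr R A C; ctxr R B D\<rbrakk> \<Longrightarrow> thesis) \<Longrightarrow> thesis"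
  by (erule ctxr.cases) auto

lemma ctxr_LamE: "ctxr R (Lam P) N \<Longrightarrow>
   (\<lbrakk>(Lam P, N) \<in> R\<rbrakk> \<Longrightarrow> thesis) \<Longrightarrow>
   (\<And>Q. \<lbrakk>N = Lam Q; ctxr R P Q\<rbrakk> \<Longrightarrow> thesis) \<Longrightarrow> thesis"
  by (erule ctxr.cases) auto

lemma fill_ctxr:
  "length Ms = holes C \<Longrightarrow> length Ns = holes C \<Longrightarrow> list_all2 (\<lambda>M N. (M, N) \<in> R) Ms Ns
   \<Longrightarrow> ctxr R (fill C Ms) (fill C Ns)"
proof (induction C arbitrary: Ms Ns)
  case (CVar x)
  then show ?case by (simp add: cvar)
next
  case CHole
  then obtain m n where "Ms = [m]" "Ns = [n]"
    by (cases Ms; cases Ns; auto)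
  with CHole show ?case by (auto intro: cbase)
next
  case (CApp C1 C2)
  have a: "ctxr R (fill C1 (take (holes C1) Ms)) (fill C1 (take (holes C1) Ns))"
    by (rule CApp.IH(1)) (use CApp.prems in auto)
  have b: "ctxr R (fill C2 (drop (holes C1) Ms)) (fill C2 (drop (holes C1) Ns))"
    by (rule CApp.IH(2)) (use CApp.prems in auto)
  show ?case using capp[OF a b] by simp
next
  case (CLam C)
  then show ?case by (auto intro: clam)
qed

lemma ctxr_fill:
  "ctxr R M N \<Longrightarrow> \<exists>C Ms Ns. length Ms = holes C \<and> length Ns = holes C \<and>
     list_all2 (\<lambda>M N. (M, N) \<in> R) Ms Ns \<and> M = fill C Ms \<and> N = fill C Ns"
proof (induction rule: ctxr.induct)
  case (cvar i)
  show ?case by (rule exI[of _ "CVar i"]) auto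
next
  case (cbase M N)
  show ?case by (rule exI[of _ CHole], rule exI[of _ "[M]"], rule exI[of _ "[N]"]) (use cbase in auto)
next
  case (capp M1 N1 M2 N2)
  then obtain C1 Ms1 Ns1 C2 Ms2 Ns2 where h: "length Ms1 = holes C1" "length Ns1 = holes C1"
     "list_all2 (\<lambda>M N. (M, N) \<in> R) Ms1 Ns1" "M1 = fill C1 Ms1" "N1 = fill C1 Ns1"
     "length Ms2 = holes C2" "length Ns2 = holes C2"
     "list_all2 (\<lambda>M N. (M, N) \<in> R) Ms2 Ns2" "M2 = fill C2 Ms2" "N2 = fill C2 Ns2"
    by blast
  show ?case
    by (rule exI[of _ "CApp C1 C2"], rule exI[of _ "Ms1 @ Ms2"], rule exI[of _ "Ns1 @ Ns2"])
       (use h in \<open>auto intro: list_all2_appendI\<close>)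
next
  case (clam M N)
  then obtain C Ms Ns where "length Ms = holes C \<and> length Ns = holes C \<and>
     list_all2 (\<lambda>M N. (M, N) \<in> R) Ms Ns \<and> M = fill C Ms \<and> N = fill C Ns" by blast
  then show ?case by (intro exI[of _ "CLam C"]) auto
qed

lemma ctx_closure_iff: "(M, N) \<in> ctx_closure R \<longleftrightarrow> ctxr R M N \<and> closed M \<and> closed N"
proof
  assume "(M, N) \<in> ctx_closure R"
  then obtain C Ms Ns where "M = fill C Ms" "N = fill C Ns" "length Ms = holes C" "length Ns = holes C"
     "list_all2 (\<lambda>M N. (M, N) \<in> R) Ms Ns" "closed M" "closed N"
    unfolding ctx_closure_def by blast
  then show "ctxr R M N \<and> closed M \<and> closed N" using fill_ctxr by blast
next
  assume h: "ctxr R M N \<and> closed M \<and> closed N"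
  then obtain C Ms Ns where "M = fill C Ms" "N = fill C Ns" "length Ms = holes C" "length Ns = holes C"
     "list_all2 (\<lambda>M N. (M, N) \<in> R) Ms Ns" using ctxr_fill by blast
  then show "(M, N) \<in> ctx_closure R" using h unfolding ctx_closure_def by blast
qed

lemma ctxr_mono: "ctxr R M N \<Longrightarrow> R \<subseteq> S \<Longrightarrow> ctxr S M N"
  by (induction rule: ctxr.induct) (auto intro: ctxr.intros)

lemma ctx_closure_mono: "R \<subseteq> S \<Longrightarrow> ctx_closure R \<subseteq> ctx_closure S"
  by (auto simp: ctx_closure_iff intro: ctxr_mono)

lemma ctxr_idem: "ctxr (ctx_closure R) M N \<Longrightarrow> ctxr R M N"
  by (induction rule: ctxr.induct) (auto intro: ctxr.intros simp: ctx_closure_iff)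

lemma ctx_closure_idem: "(X, Y) \<in> ctx_closure (ctx_closure R) \<Longrightarrow> (X, Y) \<in> ctx_closure R"
  by (auto simp: ctx_closure_iff intro: ctxr_idem)

lemma ctxr_conv1: "ctxr R M N \<Longrightarrow> ctxr (converse R) N M"
  by (induction rule: ctxr.induct) (auto intro: ctxr.intros)

lemma ctxr_conv: "ctxr (converse R) N M \<longleftrightarrow> ctxr R M N"
  using ctxr_conv1[of R M N] ctxr_conv1[of "converse R" N M] by auto

lemma ctx_closure_conv: "ctx_closure (converse R) = converse (ctx_closure R)"
  by (auto simp: ctx_closure_iff ctxr_conv)

lemma closedn_mono: "closedn k M \<Longrightarrow> k \<le> j \<Longrightarrow> closedn j M"
  by (induction M arbitrary: k j) auto

lemma lift_closed: "closedn k M \<Longrightarrow> k \<le> j \<Longrightarrow> lift M j = M"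
  by (induction M arbitrary: k j) auto

lemma subst_closed: "closedn k M \<Longrightarrow> k \<le> j \<Longrightarrow> subst M X j = M"
  by (induction M arbitrary: k j X) auto

lemma closedn_lift: "closedn k M \<Longrightarrow> closedn (Suc k) (lift M j)"
  by (induction M arbitrary: k j) auto

lemma closedn_subst: "closedn (Suc k) P \<Longrightarrow> closedn k X \<Longrightarrow> j \<le> k \<Longrightarrow> closedn k (subst P X j)"
  by (induction P arbitrary: k X j) (auto simp: closedn_lift)

lemma cbn_closed: "cbn M M' \<Longrightarrow> closed M \<Longrightarrow> closed M'"
  by (induction rule: cbn.induct) (auto simp: closed_def closedn_subst)

lemma cbn_star_closed: "cbn_star M M' \<Longrightarrow> closed M \<Longrightarrow> closed M'"
  by (induction rule: rtranclp_induct) (auto simp: cbn_closed)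

lemma ctxr_lift: assumes "\<forall>(a, b)\<in>R. closed a \<and> closed b" shows "ctxr R X Y \<Longrightarrow> ctxr R (lift X j) (lift Y j)"
proof (induction arbitrary: j rule: ctxr.induct)
  case (cbase M N)
  then have "closed M" "closed N" using assms by auto
  then show ?case using lift_closed[of 0 M j] lift_closed[of 0 N j] cbase
    by (auto simp: closed_def intro: ctxr.intros)
qed (auto intro: ctxr.intros)

lemma ctxr_subst: assumes Rc: "\<forall>(a, b)\<in>R. closed a \<and> closed b" shows "ctxr R P Q \<Longrightarrow> ctxr R X Y
   \<Longrightarrow> ctxr R (subst P X k) (subst Q Y k)"
proof (induction arbitrary: X Y k rule: ctxr.induct)
  case (cbase M N)
  then have "closed M" "closed N" using Rc by auto
  then show ?case using subst_closed[of 0 M k X] subst_closed[of 0 N k Y] cbase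
    by (auto simp: closed_def intro: ctxr.intros)
next
  case (clam M N)
  show ?case using clam.IH[OF ctxr_lift[OF Rc clam.prems], of 0 "Suc k"] by (simp add: ctxr.clam)
qed (auto intro: ctxr.intros)

lemma apps_Nil[simp]: "apps E [] = E" by (simp add: apps_def)
lemma apps_Cons[simp]: "apps E (m # ms) = apps (App E m) ms" by (simp add: apps_def)
lemma apps_snoc[simp]: "apps E (ms @ [m]) = App (apps E ms) m" by (simp add: apps_def)

lemma closed_apps: "closedn k (apps E Ms) \<longleftrightarrow> closedn k E \<and> (\<forall>m\<in>set Ms. closedn k m)"
  by (induction Ms arbitrary: E) auto

lemma cbn_apps: "cbn A B \<Longrightarrow> cbn (apps A ns) (apps B ns)"
  by (induction ns arbitrary: A B) (auto intro: cbn_app)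

lemma cbn_star_apps: "cbn_star A B \<Longrightarrow> cbn_star (apps A ns) (apps B ns)"
  by (induction rule: rtranclp_induct) (auto intro: rtranclp.rtrancl_into_rtrancl cbn_apps)

lemma cbn_star_app: "cbn_star A B \<Longrightarrow> cbn_star (App A D) (App B D)"
  using cbn_star_apps[of A B "[D]"] by simp

lemma apps_Lam: "apps E Ms = Lam P \<Longrightarrow> Ms = [] \<and> E = Lam P"
  by (induction Ms arbitrary: E) auto

lemma cbn_apps_cases: "cbn (apps E Ms) M' \<Longrightarrow> Ms \<noteq> [] \<Longrightarrow>
   (\<exists>E'. cbn E E' \<and> M' = apps E' Ms) \<or>
   (\<exists>P m ms. E = Lam P \<and> Ms = m # ms \<and> M' = apps (subst P m 0) ms)"
proof (induction Ms arbitrary: E M')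
  case Nil then show ?case by simp
next
  case (Cons m ms)
  show ?case
  proof (cases "ms = []")
    case True
    with Cons.prems have "cbn (App E m) M'" by simp
    then show ?thesis using True by (cases rule: cbn.cases) auto
  next
    case False
    from Cons.IH[of "App E m" M'] Cons.prems False
    have "(\<exists>E'. cbn (App E m) E' \<and> M' = apps E' ms) \<or>
      (\<exists>P m' ms'. App E m = Lam P \<and> ms = m' # ms' \<and> M' = apps (subst P m' 0) ms')" by simp
    then obtain E' where "cbn (App E m) E'" "M' = apps E' ms" by auto
    from this(1) show ?thesis using \<open>M' = _\<close> by (cases rule: cbn.cases) auto
  qed
qed

lemma app_closure_base: "(E, F) \<in> R \<Longrightarrow> (E, F) \<in> app_closure R R'"
  unfolding app_closure_def by (rule CollectI, rule exI[of _ E], rule exI[of _ F],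
     rule exI[of _ "[]"], rule exI[of _ "[]"]) simp

lemma app_closure_snoc: "(A, C) \<in> app_closure R R' \<Longrightarrow> (B, D) \<in> R' \<Longrightarrow> (App A B, App C D) \<in> app_closure R R'"
proof -
  assume "(A, C) \<in> app_closure R R'" "(B, D) \<in> R'"
  then obtain E F Ms Ns where h: "A = apps E Ms" "C = apps F Ns" "(E, F) \<in> R"
    "list_all2 (\<lambda>M N. (M, N) \<in> R') Ms Ns" unfolding app_closure_def by blast
  show ?thesis unfolding app_closure_def
    by (rule CollectI, rule exI[of _ E], rule exI[of _ F],
     rule exI[of _ "Ms @ [B]"], rule exI[of _ "Ns @ [D]"]) (use h \<open>(B, D) \<in> R'\<close> in \<open>auto intro: list_all2_appendI\<close>)
qed

lemma list_all2_swap': "list_all2 P xs ys \<Longrightarrow> list_all2 (\<lambda>a b. P b a) ys xs"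
  by (auto simp: list_all2_conv_all_nth)

lemma app_closure_conv: "app_closure (converse R) (converse R') = converse (app_closure R R')"
proof (intro equalityI subsetI)
  fix x assume "x \<in> app_closure (converse R) (converse R')"
  then obtain E F Ms Ns where h: "x = (apps E Ms, apps F Ns)" "(F, E) \<in> R"
    "list_all2 (\<lambda>M N. (N, M) \<in> R') Ms Ns" unfolding app_closure_def by auto
  have "list_all2 (\<lambda>M N. (M, N) \<in> R') Ns Ms" using list_all2_swap'[OF h(3)] by simp
  then have "(apps F Ns, apps E Ms) \<in> app_closure R R'" using h unfolding app_closure_def by blast
  then show "x \<in> converse (app_closure R R')" using h by simp
next
  fix x assume "x \<in> converse (app_closure R R')"
  then obtain E F Ms Ns where h: "x = (apps F Ns, apps E Ms)" "(E, F) \<in> R"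
    "list_all2 (\<lambda>M N. (M, N) \<in> R') Ms Ns" unfolding app_closure_def by auto
  have "list_all2 (\<lambda>M N. (M, N) \<in> converse R') Ns Ms" using list_all2_swap'[OF h(3)] by simp
  then show "x \<in> app_closure (converse R) (converse R')" using h unfolding app_closure_def by blast
qed

lemma app_closure_mono: assumes "R \<subseteq> S" "R' \<subseteq> S'" shows "app_closure R R' \<subseteq> app_closure S S'"
proof
  fix x assume a0: "x \<in> app_closure R R'"
  note a = assms a0
  then obtain E F Ms Ns where h: "x = (apps E Ms, apps F Ns)" "(E, F) \<in> R"
    "list_all2 (\<lambda>M N. (M, N) \<in> R') Ms Ns" unfolding app_closure_def by auto
  have "list_all2 (\<lambda>M N. (M, N) \<in> S') Ms Ns" using h(3) a(2) by (auto elim: list_all2_mono)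
  then show "x \<in> app_closure S S'" using h a unfolding app_closure_def by blast
qed

lemma red:
  assumes R1c: "\<forall>(a, b)\<in>R1. closed a \<and> closed b" and R12: "R1 \<subseteq> R2" and le: "R1 \<subseteq> S1"
  and hA: "\<And>M N M'. (M, N) \<in> R2 \<Longrightarrow> cbn M M' \<Longrightarrow> \<exists>N'. cbn_star N N' \<and> (M', N') \<in> S2"
  and hB: "\<And>M N P. (M, N) \<in> R2 \<Longrightarrow> M = Lam P \<Longrightarrow> \<exists>Q. cbn_star N (Lam Q) \<and>
          (\<forall>X Y. (X, Y) \<in> ctx_closure R1 \<longrightarrow> (subst P X 0, subst Q Y 0) \<in> S2)"
  shows "cbn M M' \<Longrightarrow> ctxr R1 M N \<Longrightarrow> closed M \<Longrightarrow> closed N \<Longrightarrow>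
     \<exists>N'. cbn_star N N' \<and> ((M', N') \<in> app_closure S2 (ctx_closure S1) \<or> ctxr R1 M' N')"
proof (induction arbitrary: N rule: cbn.induct)
  case (cbn_app A A' B N)
  from cbn_app.prems(1) show ?case
  proof (rule ctxr_AppE)
    assume cbase: "(App A B, N) \<in> R1"
    then obtain N' where "cbn_star N N'" "(App A' B, N') \<in> S2"
      using hA[OF subsetD[OF R12 cbase] cbn.cbn_app[OF cbn_app.hyps]] by blast
    then show ?thesis using app_closure_base by blast
  next
    fix C D assume capp: "N = App C D" "ctxr R1 A C" "ctxr R1 B D"
    have cl: "closed A" "closed B" "closed C" "closed D"
      using cbn_app.prems capp by (auto simp: closed_def)
    obtain C' where C': "cbn_star C C'"
      "(A', C') \<in> app_closure S2 (ctx_closure S1) \<or> ctxr R1 A' C'"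
      using cbn_app.IH[OF capp(2) cl(1) cl(3)] by blast
    have BD: "(B, D) \<in> ctx_closure S1" using capp(3) cl le
      by (auto simp: ctx_closure_iff intro: ctxr_mono)
    have "cbn_star N (App C' D)" using capp(1) cbn_star_app[OF C'(1)] by simp
    moreover have "(App A' B, App C' D) \<in> app_closure S2 (ctx_closure S1) \<or> ctxr R1 (App A' B) (App C' D)"
      using C'(2) app_closure_snoc[OF _ BD] capp(3) ctxr.capp by blast
    ultimately show ?thesis by blast
  qed
next
  case (cbn_beta P B N)
  from cbn_beta.prems(1) show ?case
  proof (rule ctxr_AppE)
    assume cbase: "(App (Lam P) B, N) \<in> R1"
    then obtain N' where "cbn_star N N'" "(subst P B 0, N') \<in> S2"
      using hA[OF subsetD[OF R12 cbase] cbn.cbn_beta] by blast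
    then show ?thesis using app_closure_base by blast
  next
    fix C D assume capp: "N = App C D" "ctxr R1 (Lam P) C" "ctxr R1 B D"
    have cl: "closed B" "closed C" "closed D"
      using cbn_beta.prems capp by (auto simp: closed_def)
    have BD: "(B, D) \<in> ctx_closure R1" using capp(3) cl by (auto simp: ctx_closure_iff)
    from capp(2) show ?thesis
    proof (rule ctxr_LamE)
      assume cbase: "(Lam P, C) \<in> R1"
      then obtain Q where Q: "cbn_star C (Lam Q)"
        "\<forall>X Y. (X, Y) \<in> ctx_closure R1 \<longrightarrow> (subst P X 0, subst Q Y 0) \<in> S2"
        using hB[OF subsetD[OF R12 cbase] refl] by blast
      have "cbn_star N (subst Q D 0)" using capp(1) cbn_star_app[OF Q(1), of D]
        by (simp add: rtranclp.rtrancl_into_rtrancl cbn.cbn_beta)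
      then show ?thesis using Q(2) BD app_closure_base by blast
    next
      fix Q assume clam: "C = Lam Q" "ctxr R1 P Q"
      have "cbn_star N (subst Q D 0)" using capp(1) clam by (simp add: cbn.cbn_beta r_into_rtranclp)
      moreover have "ctxr R1 (subst P B 0) (subst Q D 0)"
        using ctxr_subst[OF R1c clam(2) capp(3)] .
      ultimately show ?thesis by blast
    qed
  qed
qed

definition half :: "crel \<Rightarrow> crel \<Rightarrow> bool" where
  "half R S \<longleftrightarrow> (\<forall>M N. (M, N) \<in> snd R \<longrightarrow>
      (\<forall>M'. cbn M M' \<longrightarrow> (\<exists>N'. cbn_star N N' \<and> (M', N') \<in> snd S)) \<and>
      (\<forall>P. M = Lam P \<longrightarrow> (\<exists>Q. cbn_star N (Lam Q) \<and>
          (\<forall>X Y. (X, Y) \<in> ctx_closure (fst R) \<longrightarrow> (subst P X 0, subst Q Y 0) \<in> snd S))))"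

definition flip :: "crel \<Rightarrow> crel" where
  "flip R = (converse (fst R), converse (snd R))"

lemma half_flip: "half (flip R) (flip S) \<longleftrightarrow> (\<forall>M N. (M, N) \<in> snd R \<longrightarrow>
      (\<forall>N'. cbn N N' \<longrightarrow> (\<exists>M'. cbn_star M M' \<and> (M', N') \<in> snd S)) \<and>
      (\<forall>Q. N = Lam Q \<longrightarrow> (\<exists>P. cbn_star M (Lam P) \<and>
          (\<forall>X Y. (X, Y) \<in> ctx_closure (fst R) \<longrightarrow> (subst P X 0, subst Q Y 0) \<in> snd S))))"
  unfolding half_def flip_def
  apply (simp add: ctx_closure_conv)
  apply (rule iffI)
   apply (intro allI impI)
   apply (erule_tac x=N in allE, erule_tac x=M in allE)
   apply (elim impE conjE, assumption)
   apply (intro conjI allI impI)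
    apply blast
   apply (erule_tac x=Q in allE, erule impE, assumption, elim exE conjE)
   apply (rule_tac x=Qa in exI, simp)
  apply (intro allI impI)
  apply (erule_tac x=N in allE, erule_tac x=M in allE)
  apply (elim impE conjE, assumption)
  apply (intro conjI allI impI)
   apply blast
  apply (erule_tac x=P in allE, erule impE, assumption, elim exE conjE)
  apply (rule_tac x=Pa in exI, simp)
  done

lemma progress_half: "progress R S \<longleftrightarrow> half R S \<and> half (flip R) (flip S)"
  unfolding half_flip unfolding progress_def half_def by (simp only: imp_conjR all_conj_distrib conj_assoc)

lemma cclos_flip: "cclos (flip R) = flip (cclos R)"
  unfolding cclos_def flip_def by (simp add: ctx_closure_conv app_closure_conv converse_Un)

lemma half_main:
  assumes R1c: "\<forall>(a, b)\<in>fst R. closed a \<and> closed b" and R12: "fst R \<subseteq> snd R"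
    and le: "fst R \<subseteq> fst S" and hRS: "half R S"
    and R2c: "\<forall>(a, b)\<in>snd R. closed a \<and> closed b"
  shows "half (cclos R) (cclos S)"
  unfolding half_def
proof (intro allI impI conjI)
  fix M N assume MN: "(M, N) \<in> snd (cclos R)"
  have h: "\<forall>M N. (M, N) \<in> snd R \<longrightarrow> (\<forall>M'. cbn M M' \<longrightarrow> (\<exists>N'. cbn_star N N' \<and> (M', N') \<in> snd S)) \<and>
      (\<forall>P. M = Lam P \<longrightarrow> (\<exists>Q. cbn_star N (Lam Q) \<and>
          (\<forall>X Y. (X, Y) \<in> ctx_closure (fst R) \<longrightarrow> (subst P X 0, subst Q Y 0) \<in> snd S)))"
    using hRS unfolding half_def by (simp only:)
  have hA: "\<And>M N M'. (M, N) \<in> snd R \<Longrightarrow> cbn M M' \<Longrightarrow> \<exists>N'. cbn_star N N' \<and> (M', N') \<in> snd S"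
    using h by simp
  have hB: "\<And>M N P. (M, N) \<in> snd R \<Longrightarrow> M = Lam P \<Longrightarrow> \<exists>Q. cbn_star N (Lam Q) \<and>
          (\<forall>X Y. (X, Y) \<in> ctx_closure (fst R) \<longrightarrow> (subst P X 0, subst Q Y 0) \<in> snd S)"
    using h by simp
  have Ssub: "snd S \<subseteq> snd (cclos S)" unfolding cclos_def using app_closure_base by auto
  have Ssub2: "ctx_closure (fst R) \<subseteq> snd (cclos S)" unfolding cclos_def using ctx_closure_mono[OF le] by auto
  have fcl: "fst (cclos R) = ctx_closure (fst R)" by (simp add: cclos_def)
  have liftQ: "\<forall>X Y. (X, Y) \<in> ctx_closure (fst (cclos R)) \<longrightarrow> (subst P X 0, subst Q Y 0) \<in> snd (cclos S)"
    if a: "\<forall>X Y. (X, Y) \<in> ctx_closure (fst R) \<longrightarrow> (subst P X 0, subst Q Y 0) \<in> snd S" for P Q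
  proof (intro allI impI)
    fix X Y assume "(X, Y) \<in> ctx_closure (fst (cclos R))"
    then have "(X, Y) \<in> ctx_closure (fst R)" using fcl ctx_closure_idem by simp
    then show "(subst P X 0, subst Q Y 0) \<in> snd (cclos S)" using a Ssub by blast
  qed
  {
    fix M'
    assume red1: "cbn M M'"
    show "\<exists>N'. cbn_star N N' \<and> (M', N') \<in> snd (cclos S)"
    proof (cases "(M, N) \<in> ctx_closure (fst R)")
      case True
      then have c: "ctxr (fst R) M N" "closed M" "closed N" by (auto simp: ctx_closure_iff)
      have "\<exists>N'. cbn_star N N' \<and> ((M', N') \<in> app_closure (snd S) (ctx_closure (fst S)) \<or> ctxr (fst R) M' N')"
        apply (rule red[of "fst R" "snd R" "fst S" "snd S"])
        apply (rule R1c)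
        apply (rule R12)
        apply (rule le)
        apply (erule (1) hA)
        apply (erule (1) hB)
        apply (rule red1)
        apply (rule c(1))
        apply (rule c(2))
        apply (rule c(3))
        done
      then obtain N' where N': "cbn_star N N'"
        "(M', N') \<in> app_closure (snd S) (ctx_closure (fst S)) \<or> ctxr (fst R) M' N'"
        by blast
      have "closed M'" "closed N'" using cbn_closed[OF red1 c(2)] cbn_star_closed[OF N'(1) c(3)] by auto
      then have "(M', N') \<in> snd (cclos S)" using N'(2) le
        by (auto simp: cclos_def ctx_closure_iff intro: ctxr_mono)
      then show ?thesis using N'(1) by blast
    next
      case False
      then have "(M, N) \<in> app_closure (snd R) (ctx_closure (fst R))" using MN by (simp add: cclos_def)
      then obtain E F Ms Ns where e: "M = apps E Ms" "N = apps F Ns" "(E, F) \<in> snd R"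
        "list_all2 (\<lambda>M N. (M, N) \<in> ctx_closure (fst R)) Ms Ns" unfolding app_closure_def by blast
      have l2: "list_all2 (\<lambda>M N. (M, N) \<in> ctx_closure (fst S)) Ms Ns"
        using e(4) ctx_closure_mono[OF le] by (auto elim: list_all2_mono)
      show ?thesis
      proof (cases "Ms = []")
        case True
        then have "Ns = []" using e(4) by simp
        have "cbn E M'" using red1 e(1) True by simp
        then obtain N' where "cbn_star F N'" "(M', N') \<in> snd S" using hA[OF e(3) \<open>cbn E M'\<close>] by blast
        then show ?thesis using True e \<open>Ns = []\<close> Ssub by auto
      next
        case False
        from cbn_apps_cases[OF red1[unfolded e(1)] False] show ?thesis
        proof
          assume "\<exists>E'. cbn E E' \<and> M' = apps E' Ms"
          then obtain E' where E': "cbn E E'" "M' = apps E' Ms" by blast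
          obtain F' where F': "cbn_star F F'" "(E', F') \<in> snd S" using hA[OF e(3) E'(1)] by blast
          have "(apps E' Ms, apps F' Ns) \<in> app_closure (snd S) (ctx_closure (fst S))"
            unfolding app_closure_def using F'(2) l2 by blast
          then show ?thesis using E'(2) e(2) cbn_star_apps[OF F'(1)] by (auto simp: cclos_def)
        next
          assume "\<exists>P m ms. E = Lam P \<and> Ms = m # ms \<and> M' = apps (subst P m 0) ms"
          then obtain P m ms where p: "E = Lam P" "Ms = m # ms" "M' = apps (subst P m 0) ms" by blast
          obtain n ns where nn: "Ns = n # ns" "(m, n) \<in> ctx_closure (fst R)"
            "list_all2 (\<lambda>M N. (M, N) \<in> ctx_closure (fst S)) ms ns"
            using e(4) l2 p(2) by (cases Ns) auto
          obtain Q where Q: "cbn_star F (Lam Q)"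
            "\<forall>X Y. (X, Y) \<in> ctx_closure (fst R) \<longrightarrow> (subst P X 0, subst Q Y 0) \<in> snd S"
            using hB[OF e(3) p(1)] by blast
          have "cbn_star N (apps (subst Q n 0) ns)"
          proof -
            have "cbn_star N (apps (App (Lam Q) n) ns)" using cbn_star_apps[OF Q(1), of Ns] e(2) nn(1) by simp
            moreover have "cbn (apps (App (Lam Q) n) ns) (apps (subst Q n 0) ns)"
              by (rule cbn_apps) (rule cbn.cbn_beta)
            ultimately show ?thesis by (simp add: rtranclp.rtrancl_into_rtrancl)
          qed
          moreover have "(apps (subst P m 0) ms, apps (subst Q n 0) ns) \<in> app_closure (snd S) (ctx_closure (fst S))"
            unfolding app_closure_def using Q(2) nn by blast
          ultimately show ?thesis using p(3) by (auto simp: cclos_def)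
        qed
      qed
    qed
  }
  {
    fix P assume MP: "M = Lam P"
    show "\<exists>Q. cbn_star N (Lam Q) \<and> (\<forall>X Y. (X, Y) \<in> ctx_closure (fst (cclos R)) \<longrightarrow>
        (subst P X 0, subst Q Y 0) \<in> snd (cclos S))"
    proof (cases "(M, N) \<in> ctx_closure (fst R)")
      case True
      then have c: "ctxr (fst R) (Lam P) N" "closed M" "closed N" using MP by (auto simp: ctx_closure_iff)
      from c(1) show ?thesis
      proof (rule ctxr_LamE)
        assume cbase: "(Lam P, N) \<in> fst R"
        then obtain Q where Q: "cbn_star N (Lam Q)"
            "\<forall>X Y. (X, Y) \<in> ctx_closure (fst R) \<longrightarrow> (subst P X 0, subst Q Y 0) \<in> snd S"
          using hB[of "Lam P" N P] cbase R12 by blast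
        then show ?thesis using liftQ[OF Q(2)] by blast
      next
        fix Q assume clam: "N = Lam Q" "ctxr (fst R) P Q"
        have "\<forall>X Y. (X, Y) \<in> ctx_closure (fst (cclos R)) \<longrightarrow> (subst P X 0, subst Q Y 0) \<in> snd (cclos S)"
        proof (intro allI impI)
          fix X Y assume "(X, Y) \<in> ctx_closure (fst (cclos R))"
          then have xy: "(X, Y) \<in> ctx_closure (fst R)" using fcl ctx_closure_idem by simp
          then have xy2: "ctxr (fst R) X Y" "closed X" "closed Y" by (auto simp: ctx_closure_iff)
          have "closed (subst P X 0)" "closed (subst Q Y 0)"
            using c(2,3) MP clam(1) xy2 by (auto simp: closed_def closedn_subst)
          then have "(subst P X 0, subst Q Y 0) \<in> ctx_closure (fst R)"
            using ctxr_subst[OF R1c clam(2) xy2(1)] by (simp add: ctx_closure_iff)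
          then show "(subst P X 0, subst Q Y 0) \<in> snd (cclos S)" using Ssub2 by blast
        qed
        then show ?thesis using clam(1) by blast
      qed
    next
      case False
      then have "(M, N) \<in> app_closure (snd R) (ctx_closure (fst R))" using MN by (simp add: cclos_def)
      then obtain E F Ms Ns where e: "M = apps E Ms" "N = apps F Ns" "(E, F) \<in> snd R"
        "list_all2 (\<lambda>M N. (M, N) \<in> ctx_closure (fst R)) Ms Ns" unfolding app_closure_def by blast
      have "Ms = []" "E = Lam P" using apps_Lam[of E Ms P] e(1) MP by auto
      then have "Ns = []" using e(4) by simp
      obtain Q where Q: "cbn_star F (Lam Q)"
            "\<forall>X Y. (X, Y) \<in> ctx_closure (fst R) \<longrightarrow> (subst P X 0, subst Q Y 0) \<in> snd S"
          using hB[OF e(3) \<open>E = Lam P\<close>] by blast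
      then show ?thesis using e(2) \<open>Ns = []\<close> liftQ[OF Q(2)] by auto
    qed
  }
qed


lemma coupled_closed1: "coupled R \<Longrightarrow> \<forall>(a, b)\<in>fst R. closed a \<and> closed b"
  unfolding coupled_def by blast

lemma coupled_closed2: "coupled R \<Longrightarrow> \<forall>(a, b)\<in>snd R. closed a \<and> closed b"
  unfolding coupled_def by blast

lemma coupled_flip: "coupled R \<Longrightarrow> coupled (flip R)"
  unfolding coupled_def flip_def by auto

lemma crel_le_flip: "crel_le R S \<Longrightarrow> crel_le (flip R) (flip S)"
  unfolding crel_le_def flip_def by auto

lemma progress_main:
  assumes "coupled R" "coupled S" "crel_le R S" "progress R S"
  shows "progress (cclos R) (cclos S)"
proof -
  have a: "half (cclos R) (cclos S)"
    using half_main[OF coupled_closed1[OF assms(1)] _ _ _ coupled_closed2[OF assms(1)]] assms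
    unfolding coupled_def crel_le_def progress_half by blast
  have fR: "coupled (flip R)" using coupled_flip assms(1) .
  have b: "half (cclos (flip R)) (cclos (flip S))"
    using half_main[OF coupled_closed1[OF fR] _ _ _ coupled_closed2[OF fR]] fR crel_le_flip[OF assms(3)] assms(4)
    unfolding coupled_def crel_le_def progress_half by blast
  show ?thesis using a b unfolding progress_half cclos_flip by simp
qed

lemma crel_le_cclos: "crel_le R S \<Longrightarrow> crel_le (cclos R) (cclos S)"
  unfolding crel_le_def cclos_def
  using ctx_closure_mono app_closure_mono by (simp add: sup.coboundedI1 sup.coboundedI2 le_supI ctx_closure_mono app_closure_mono)

lemma coupled_cclos: assumes "coupled R" shows "coupled (cclos R)"
proof -
  have c2: "\<forall>(a, b)\<in>snd R. closed a \<and> closed b" using coupled_closed2[OF assms] .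
  have "app_closure (snd R) (ctx_closure (fst R)) \<subseteq> {(M, N). closed M \<and> closed N}"
  proof
    fix x assume "x \<in> app_closure (snd R) (ctx_closure (fst R))"
    then obtain E F Ms Ns where h: "x = (apps E Ms, apps F Ns)" "(E, F) \<in> snd R"
      "list_all2 (\<lambda>M N. (M, N) \<in> ctx_closure (fst R)) Ms Ns" unfolding app_closure_def by auto
    have "\<forall>m\<in>set Ms. closed m" "\<forall>m\<in>set Ns. closed m" using h(3)
      by (auto simp: list_all2_conv_all_nth in_set_conv_nth ctx_closure_iff)
    then show "x \<in> {(M, N). closed M \<and> closed N}" using h c2
      by (auto simp: closed_def closed_apps)
  qed
  moreover have "ctx_closure (fst R) \<subseteq> {(M, N). closed M \<and> closed N}"
    by (auto simp: ctx_closure_iff)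
  ultimately show ?thesis unfolding coupled_def cclos_def by auto
qed

lemma le_cclos: assumes "coupled R" shows "crel_le R (cclos R)"
proof -
  have "fst R \<subseteq> ctx_closure (fst R)"
    using coupled_closed1[OF assms] by (auto simp: ctx_closure_iff intro: cbase)
  moreover have "snd R \<subseteq> app_closure (snd R) (ctx_closure (fst R))"
    using app_closure_base by auto
  ultimately show ?thesis unfolding crel_le_def cclos_def by auto
qed

lemma progress_mono:
  assumes "progress R S" "fst R' \<subseteq> fst R" "snd R' \<subseteq> snd R" "snd S \<subseteq> snd S'"
  shows "progress R' S'"
proof -
  have cc: "ctx_closure (fst R') \<subseteq> ctx_closure (fst R)" using ctx_closure_mono[OF assms(2)] .
  show ?thesis using assms(1) unfolding progress_def
    apply (intro allI impI)
    apply (erule_tac x=M in allE, erule_tac x=N in allE)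
    apply (erule impE, rule subsetD[OF assms(3)], assumption)
    apply (elim conjE)
    apply (intro conjI allI impI)
       apply (use assms(4) in blast)
      apply (use assms(4) cc in blast)
     apply (use assms(4) in blast)
    apply (erule_tac x=Q in allE, erule impE, assumption, elim exE conjE)
    apply (rule_tac x=P in exI)
    apply (use assms(4) cc in blast)
    done
qed

lemma progress_Union:
  assumes "\<And>n. progress (R1, f n) S"
  shows "progress (R1, \<Union>n. f n) S"
  unfolding progress_def
proof (intro allI impI)
  fix M N assume "(M, N) \<in> snd (R1, \<Union>n. f n)"
  then obtain n where "(M, N) \<in> f n" by auto
  then show "(\<forall>M'. cbn M M' \<longrightarrow> (\<exists>N'. cbn_star N N' \<and> (M', N') \<in> snd S)) \<and>
      (\<forall>P. M = Lam P \<longrightarrow> (\<exists>Q. cbn_star N (Lam Q) \<and>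
          (\<forall>X Y. (X, Y) \<in> ctx_closure (fst (R1, \<Union>n. f n)) \<longrightarrow> (subst P X 0, subst Q Y 0) \<in> snd S))) \<and>
      (\<forall>N'. cbn N N' \<longrightarrow> (\<exists>M'. cbn_star M M' \<and> (M', N') \<in> snd S)) \<and>
      (\<forall>Q. N = Lam Q \<longrightarrow> (\<exists>P. cbn_star M (Lam P) \<and>
          (\<forall>X Y. (X, Y) \<in> ctx_closure (fst (R1, \<Union>n. f n)) \<longrightarrow> (subst P X 0, subst Q Y 0) \<in> snd S)))"
    using assms[of n] unfolding progress_def by simp
qed

lemma part_b:
  assumes cR: "coupled R" and pR: "progress R (cclos R)"
  shows "\<exists>B. coupled_logical_bisim B \<and> crel_le R B"
proof -
  define C where "C n = (cclos ^^ n) R" for n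
  have C0: "C 0 = R" and CS: "\<And>n. C (Suc n) = cclos (C n)" by (simp_all add: C_def)
  have cC: "coupled (C n)" for n
    by (induction n) (simp_all add: C0 CS cR coupled_cclos)
  have leC: "crel_le (C n) (C (Suc n))" for n
    using le_cclos[OF cC[of n]] by (simp add: CS)
  have pC: "progress (C n) (C (Suc n))" for n
  proof (induction n)
    case 0 then show ?case using pR by (simp add: C0 CS)
  next
    case (Suc n)
    then show ?case using progress_main[OF cC[of n] cC[of "Suc n"] leC[of n]] by (simp add: CS)
  qed
  have fR: "fst R \<subseteq> fst (C n)" for n
  proof (induction n)
    case 0 then show ?case by (simp add: C0)
  next
    case (Suc n) then show ?case using leC[of n] unfolding crel_le_def by blast
  qed
  define B where "B = (fst R, \<Union>n. snd (C n))"
  have "progress (fst R, snd (C n)) B" for n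
    by (rule progress_mono[OF pC[of n]]) (auto simp: B_def fR)
  then have pB: "progress B B"
    using progress_Union[of "fst R" "\<lambda>n. snd (C n)" B] by (simp add: B_def)
  have "snd R \<subseteq> snd B" unfolding B_def using C0 by auto
  moreover have "fst R \<subseteq> snd R" using cR unfolding coupled_def by blast
  moreover have "snd B \<subseteq> {(M, N). closed M \<and> closed N}"
    unfolding B_def using cC unfolding coupled_def by auto
  ultimately have "coupled B" unfolding coupled_def B_def by auto
  moreover have "crel_le R B" unfolding crel_le_def B_def using C0 by auto
  ultimately show ?thesis using pB unfolding coupled_logical_bisim_def by blast
qed

theorem mainTheorem6:
  shows "(\<forall>R S. coupled R \<and> coupled S \<and> crel_le R S \<and> progress R S \<longrightarrow>
             crel_le (cclos R) (cclos S) \<and> progress (cclos R) (cclos S))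
       \<and> (\<forall>R. coupled R \<and> progress R (cclos R) \<longrightarrow>
             (\<exists>B. coupled_logical_bisim B \<and> crel_le R B))
       \<and> (\<forall>R. coupled_logical_bisim R \<longrightarrow> coupled_logical_bisim (cclos R))"
proof -
  have a: "\<forall>R S. coupled R \<and> coupled S \<and> crel_le R S \<and> progress R S \<longrightarrow>
             crel_le (cclos R) (cclos S) \<and> progress (cclos R) (cclos S)"
    using crel_le_cclos progress_main by blast
  have b: "\<forall>R. coupled R \<and> progress R (cclos R) \<longrightarrow>
             (\<exists>B. coupled_logical_bisim B \<and> crel_le R B)"
    using part_b by blast
  have c: "coupled_logical_bisim (cclos R)" if a: "coupled_logical_bisim R" for R
  proof -
    have "coupled R" "progress R R" using a unfolding coupled_logical_bisim_def by auto
    moreover have "crel_le R R" unfolding crel_le_def by auto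
    ultimately show "coupled_logical_bisim (cclos R)"
      unfolding coupled_logical_bisim_def using coupled_cclos progress_main by blast
  qed
  show ?thesis using a b c by blast
qed

end
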